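(* Let $1\le k\le m$, let $\phi_{m,k}$ be the automorphism of the free group $F(A_1,\dots,A_m,B_1,\dots,B_k)$ described below, and let $\bar B_k$ be the image of $B_k$ in the abelianization $\mathbb Z^{m+k}$. Then $\|\phi_{m,k}^n(B_k)\|\sim|(\phi_{m,k}^{ab})^n(\bar B_k)|_1\sim|(\phi_{m,k}^{ab})^n(\bar B_k)|_\infty\sim n^k$.
   Context: $\phi_{m,k}(A_i)=A_1\cdots A_{i-1}A_iA_{i-1}^{-1}\cdots A_1^{-1}$ for $1\le i\le m$, and $\phi_{m,k}(B_j)=A_1\cdots A_m(B_1\cdots B_j)A_{j-1}^{-1}\cdots A_1^{-1}$ for $1\le j\le k$. $\|\cdot\|$ is word length with respect to the free basis; $|\cdot|_1$ and $|\cdot|_\infty$ are the $\ell_1$ and $\ell_\infty$ norms of integer vectors with respect to the basis of images of $A_i,B_j$; $\phi^{ab}$ is the induced automorphism of the abelianization. $f\sim g$ means $f\le Ag+B$ and $g\le A'f+B'$ for some constants $A,A'>0$, $B,B'\ge0$. *)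

theory Defs
  imports Complex_Main
begin

datatype gen = GA nat | GB nat

text \<open>A letter is a generator with an exponent flag: False = g, True = g^{-1}.
  Words are lists of letters; group elements are represented by freely reduced words.\<close>
type_synonym letter = "gen \<times> bool"
type_synonym word = "letter list"

definition inv_letter :: "letter \<Rightarrow> letter" where
  "inv_letter x = (fst x, \<not> snd x)"

definition inv_word :: "word \<Rightarrow> word" where
  "inv_word w = rev (map inv_letter w)"

fun reduce :: "word \<Rightarrow> word" where
  "reduce [] = []"
| "reduce (x # xs) = (case reduce xs of
      [] \<Rightarrow> [x]
    | y # ys \<Rightarrow> (if y = inv_letter x then ys else x # y # ys))"

definition word_norm :: "word \<Rightarrow> nat" where
  "word_norm w = length (reduce w)"

definition gens :: "nat \<Rightarrow> nat \<Rightarrow> gen set" where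
  "gens m k = GA ` {1..m} \<union> GB ` {1..k}"

text \<open>Images of the generators:
  phi(A_i) = A_1 ... A_{i-1} A_i A_{i-1}^{-1} ... A_1^{-1},
  phi(B_j) = A_1 ... A_m (B_1 ... B_j) A_{j-1}^{-1} ... A_1^{-1}.\<close>
definition phi_gen :: "nat \<Rightarrow> gen \<Rightarrow> word" where
  "phi_gen m g = (case g of
      GA i \<Rightarrow> map (\<lambda>l. (GA l, False)) [1..<i] @ [(GA i, False)]
              @ inv_word (map (\<lambda>l. (GA l, False)) [1..<i])
    | GB j \<Rightarrow> map (\<lambda>l. (GA l, False)) [1..<m+1] @ map (\<lambda>l. (GB l, False)) [1..<j+1]
              @ inv_word (map (\<lambda>l. (GA l, False)) [1..<j]))"

definition phi_letter :: "nat \<Rightarrow> letter \<Rightarrow> word" where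
  "phi_letter m x = (if snd x then inv_word (phi_gen m (fst x)) else phi_gen m (fst x))"

definition phi :: "nat \<Rightarrow> word \<Rightarrow> word" where
  "phi m w = reduce (concat (map (phi_letter m) w))"

text \<open>Integer vectors in Z^{m+k} are functions gen => int (coordinates w.r.t. the
  images of A_i, B_j); only coordinates in gens m k matter.\<close>
definition ab_letter :: "letter \<Rightarrow> gen \<Rightarrow> int" where
  "ab_letter x = (\<lambda>g. if g = fst x then (if snd x then -1 else 1) else 0)"

definition ab :: "word \<Rightarrow> gen \<Rightarrow> int" where
  "ab w = (\<lambda>g. \<Sum>x\<leftarrow>w. ab_letter x g)"

definition phi_ab :: "nat \<Rightarrow> nat \<Rightarrow> (gen \<Rightarrow> int) \<Rightarrow> (gen \<Rightarrow> int)" where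
  "phi_ab m k v = (\<lambda>g. \<Sum>h\<in>gens m k. v h * ab (phi_gen m h) g)"

definition norm1 :: "nat \<Rightarrow> nat \<Rightarrow> (gen \<Rightarrow> int) \<Rightarrow> int" where
  "norm1 m k v = (\<Sum>g\<in>gens m k. \<bar>v g\<bar>)"

definition norminf :: "nat \<Rightarrow> nat \<Rightarrow> (gen \<Rightarrow> int) \<Rightarrow> int" where
  "norminf m k v = Max ((\<lambda>g. \<bar>v g\<bar>) ` gens m k)"

definition growth_equiv :: "(nat \<Rightarrow> real) \<Rightarrow> (nat \<Rightarrow> real) \<Rightarrow> bool" (infix "\<sim>\<^sub>g" 50) where
  "f \<sim>\<^sub>g g \<longleftrightarrow>
     (\<exists>A B. A > 0 \<and> B \<ge> 0 \<and> (\<forall>n. f n \<le> A * g n + B)) \<and>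
     (\<exists>A B. A > 0 \<and> B \<ge> 0 \<and> (\<forall>n. g n \<le> A * f n + B))"

end

theory Submission
  imports Defs
begin


fun rd :: "word \<Rightarrow> bool" where
  "rd [] = True"
| "rd [x] = True"
| "rd (x # y # ys) = (y \<noteq> inv_letter x \<and> rd (y # ys))"

lemma inv_inv_letter[simp]: "inv_letter (inv_letter x) = x"
  by (simp add: inv_letter_def)

lemma inv_letter_neq[simp]: "inv_letter x \<noteq> x"
  by (cases x) (simp add: inv_letter_def)

lemma rd_tl: "rd (y # ys) \<Longrightarrow> rd ys"
  by (cases ys) auto

lemma rd_reduce: "rd (reduce w)"
proof (induction w)
  case Nil then show ?case by simp
next
  case (Cons x xs)
  show ?case
  proof (cases "reduce xs")
    case Nil then show ?thesis by simp
  next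
    case (Cons y ys)
    then show ?thesis using Cons.IH by (auto dest: rd_tl)
  qed
qed

lemma reduce_rd: "rd w \<Longrightarrow> reduce w = w"
proof (induction w rule: rd.induct)
  case 1 then show ?case by simp
next
  case (2 x) then show ?case by simp
next
  case (3 x y ys)
  then show ?case by auto
qed

lemma reduce_reduce[simp]: "reduce (reduce w) = reduce w"
  by (rule reduce_rd[OF rd_reduce])

lemma reduce_Cons_red: "reduce (x # xs) = reduce (x # reduce xs)"
  by simp

lemma reduce_append_red: "reduce (u @ v) = reduce (u @ reduce v)"
proof (induction u)
  case Nil then show ?case by simp
next
  case (Cons x u)
  have "reduce ((x # u) @ v) = reduce (x # reduce (u @ v))" by simp
  also have "\<dots> = reduce (x # reduce (u @ reduce v))" using Cons by simp
  also have "\<dots> = reduce ((x # u) @ reduce v)" by simp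
  finally show ?case .
qed

lemma reduce_cancel: "reduce (x # inv_letter x # w) = reduce w"
proof -
  have r: "rd (reduce w)" by (rule rd_reduce)
  show ?thesis
  proof (cases "reduce w")
    case Nil then show ?thesis by simp
  next
    case (Cons y ys)
    show ?thesis
    proof (cases "y = x")
      case True
      with Cons r have "rd (x # ys)" by simp
      then have "reduce ys = ys" using rd_tl reduce_rd by blast
      moreover have "case ys of [] \<Rightarrow> True | z # zs \<Rightarrow> z \<noteq> inv_letter x"
        using \<open>rd (x # ys)\<close> by (cases ys) auto
      ultimately show ?thesis using Cons True
        by (cases ys) auto
    next
      case False
      then show ?thesis using Cons by auto
    qed
  qed
qed

lemma reduce_cancel': "reduce (inv_letter x # x # w) = reduce w"
  using reduce_cancel[of "inv_letter x" w] by simp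

lemma reduce_red_Cons_append:
  assumes "rd s" shows "reduce (reduce (x # s) @ v) = reduce (x # s @ v)"
proof (cases s)
  case Nil then show ?thesis by simp
next
  case (Cons y ys)
  have rs: "reduce s = s" using assms by (rule reduce_rd)
  show ?thesis
  proof (cases "y = inv_letter x")
    case True
    have ry: "reduce ys = ys" using assms Cons rd_tl reduce_rd by blast
    have "reduce (x # s) = ys" using True Cons reduce_cancel[of x ys] ry by simp
    moreover have "reduce (x # s @ v) = reduce (ys @ v)" using True Cons reduce_cancel[of x "ys @ v"] by simp
    ultimately show ?thesis by simp
  next
    case False
    then have "reduce (x # s) = x # s" using rs Cons by simp
    then show ?thesis by simp
  qed
qed

lemma reduce_red_append: "reduce (reduce u @ v) = reduce (u @ v)"
proof (induction u arbitrary: v)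
  case Nil then show ?case by simp
next
  case (Cons x u)
  have "reduce (reduce (x # u) @ v) = reduce (reduce (x # reduce u) @ v)" by simp
  also have "\<dots> = reduce (x # reduce u @ v)" by (rule reduce_red_Cons_append[OF rd_reduce])
  also have "\<dots> = reduce (x # reduce (reduce u @ v))" by simp
  also have "\<dots> = reduce (x # reduce (u @ v))" using Cons by simp
  also have "\<dots> = reduce ((x # u) @ v)" by simp
  finally show ?case .
qed

lemma reduce_append_both: "reduce (u @ v) = reduce (reduce u @ reduce v)"
  by (metis reduce_append_red reduce_red_append)

definition feq :: "word \<Rightarrow> word \<Rightarrow> bool" (infix "=\<^sub>f" 50) where
  "u =\<^sub>f v \<longleftrightarrow> reduce u = reduce v"

lemma feq_refl[simp]: "u =\<^sub>f u" by (simp add: feq_def)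
lemma feq_sym: "u =\<^sub>f v \<Longrightarrow> v =\<^sub>f u" by (simp add: feq_def)
lemma feq_trans[trans]: "u =\<^sub>f v \<Longrightarrow> v =\<^sub>f w \<Longrightarrow> u =\<^sub>f w" by (simp add: feq_def)
lemma feq_eq_trans[trans]: "u = v \<Longrightarrow> v =\<^sub>f w \<Longrightarrow> u =\<^sub>f w" by simp
lemma eq_feq_trans[trans]: "u =\<^sub>f v \<Longrightarrow> v = w \<Longrightarrow> u =\<^sub>f w" by simp
lemma feq_reduce[simp]: "reduce u =\<^sub>f u" "u =\<^sub>f reduce u" by (simp_all add: feq_def)

lemma feq_ctx: "x =\<^sub>f y \<Longrightarrow> a @ x @ b =\<^sub>f a @ y @ b"
  unfolding feq_def
  by (metis reduce_append_red reduce_red_append)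

lemma feq_app: "x =\<^sub>f y \<Longrightarrow> x' =\<^sub>f y' \<Longrightarrow> x @ x' =\<^sub>f y @ y'"
  unfolding feq_def by (metis reduce_append_both)

lemma inv_word_Nil[simp]: "inv_word [] = []" by (simp add: inv_word_def)
lemma inv_word_Cons: "inv_word (x # u) = inv_word u @ [inv_letter x]" by (simp add: inv_word_def)
lemma inv_word_append[simp]: "inv_word (u @ v) = inv_word v @ inv_word u" by (simp add: inv_word_def)
lemma inv_word_inv_word[simp]: "inv_word (inv_word u) = u"
  by (simp add: inv_word_def rev_map comp_def)
lemma length_inv_word[simp]: "length (inv_word u) = length u" by (simp add: inv_word_def)

lemma cancel_left: "reduce (inv_word u @ u @ w) = reduce w"
proof (induction u arbitrary: w)
  case Nil then show ?case by simp
next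
  case (Cons x u)
  have "reduce (inv_word (x # u) @ (x # u) @ w) = reduce (inv_word u @ (inv_letter x # x # (u @ w)))"
    by (simp add: inv_word_Cons)
  also have "\<dots> = reduce (inv_word u @ reduce (inv_letter x # x # (u @ w)))"
    by (rule reduce_append_red)
  also have "\<dots> = reduce (inv_word u @ reduce (u @ w))" by (simp only: reduce_cancel')
  also have "\<dots> = reduce (inv_word u @ u @ w)" by (simp only: reduce_append_red[symmetric])
  also have "\<dots> = reduce w" by (rule Cons)
  finally show ?case .
qed

lemma cancel_right: "reduce (u @ inv_word u @ w) = reduce w"
  using cancel_left[of "inv_word u" w] by simp

lemma feq_cancel_left: "a @ inv_word u @ u @ b =\<^sub>f a @ b"
  unfolding feq_def by (metis cancel_left reduce_append_red)
lemma feq_cancel_right: "a @ u @ inv_word u @ b =\<^sub>f a @ b"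
  unfolding feq_def by (metis cancel_right reduce_append_red)

lemma feq_inv: assumes "u =\<^sub>f v" shows "inv_word u =\<^sub>f inv_word v"
proof -
  have "inv_word u =\<^sub>f inv_word u @ v @ inv_word v"
    using feq_cancel_right[of "inv_word u" v "[]"] by (simp add: feq_sym)
  also have "\<dots> =\<^sub>f inv_word u @ u @ inv_word v"
    using feq_ctx[OF feq_sym[OF assms], of "inv_word u" "inv_word v"] .
  also have "\<dots> =\<^sub>f inv_word v"
    using feq_cancel_left[of "[]" u "inv_word v"] by simp
  finally show ?thesis .
qed

lemma length_reduce: "length (reduce w) \<le> length w"
proof (induction w)
  case Nil then show ?case by simp
next
  case (Cons x xs) then show ?case by (auto split: list.split)
qed

lemma set_reduce: "set (reduce w) \<subseteq> set w"
proof (induction w)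
  case Nil then show ?case by simp
next
  case (Cons x xs) then show ?case by (auto split: list.split)
qed



definition C :: "nat \<Rightarrow> word \<Rightarrow> word" where
  "C m w = concat (map (phi_letter m) w)"

lemma phi_C: "phi m w = reduce (C m w)" by (simp add: phi_def C_def)
lemma C_append[simp]: "C m (u @ v) = C m u @ C m v" by (simp add: C_def)
lemma C_Cons: "C m (x # u) = phi_letter m x @ C m u" by (simp add: C_def)
lemma C_Nil[simp]: "C m [] = []" by (simp add: C_def)

lemma phi_letter_inv: "phi_letter m (inv_letter x) = inv_word (phi_letter m x)"
  by (simp add: phi_letter_def inv_letter_def)

lemma C_inv: "C m (inv_word u) = inv_word (C m u)"
  by (induction u) (simp_all add: inv_word_Cons C_Cons phi_letter_inv)

lemma phi_app: "phi m (u @ v) =\<^sub>f phi m u @ phi m v"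
  unfolding phi_C by (simp add: feq_def reduce_append_both[of "C m u"])

lemma phi_inv: "phi m (inv_word u) =\<^sub>f inv_word (phi m u)"
proof -
  have "phi m (inv_word u) =\<^sub>f inv_word (C m u)" unfolding phi_C C_inv by simp
  also have "\<dots> =\<^sub>f inv_word (phi m u)" unfolding phi_C by (rule feq_inv) simp
  finally show ?thesis .
qed

lemma phi_Cons: "phi m (x # w) = reduce (phi_letter m x @ phi m w)"
  unfolding phi_C C_Cons by (rule reduce_append_red)

lemma phi_step: assumes "rd r" shows "phi m (reduce (x # r)) = phi m (x # r)"
proof (cases r)
  case Nil then show ?thesis by simp
next
  case (Cons y ys)
  have rs: "reduce r = r" using assms by (rule reduce_rd)
  show ?thesis
  proof (cases "y = inv_letter x")
    case True
    have ry: "reduce ys = ys" using assms Cons rd_tl reduce_rd by blast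
    have "reduce (x # r) = ys" using True Cons reduce_cancel[of x ys] ry by simp
    moreover have "phi m (x # r) = phi m ys"
      using True Cons cancel_right[of "phi_letter m x" "C m ys"]
      by (simp add: phi_C C_Cons phi_letter_inv)
    ultimately show ?thesis by simp
  next
    case False
    then have "reduce (x # r) = x # r" using rs Cons by simp
    then show ?thesis by simp
  qed
qed

lemma phi_reduce: "phi m (reduce w) = phi m w"
proof (induction w)
  case Nil then show ?case by simp
next
  case (Cons x xs)
  have "phi m (reduce (x # xs)) = phi m (reduce (x # reduce xs))" by simp
  also have "\<dots> = phi m (x # reduce xs)" by (rule phi_step[OF rd_reduce])
  also have "\<dots> = reduce (phi_letter m x @ phi m (reduce xs))" by (rule phi_Cons)
  also have "\<dots> = phi m (x # xs)" using Cons by (simp add: phi_Cons)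
  finally show ?case .
qed

lemma phi_resp: "u =\<^sub>f v \<Longrightarrow> phi m u = phi m v"
  unfolding feq_def by (metis phi_reduce)

abbreviation Phi :: "nat \<Rightarrow> nat \<Rightarrow> word \<Rightarrow> word" where
  "Phi m n \<equiv> phi m ^^ n"

lemma Phi_Suc: "Phi m (Suc n) w = Phi m n (phi m w)"
  by (metis comp_apply funpow_Suc_right)

lemma Phi_resp: "u =\<^sub>f v \<Longrightarrow> Phi m n u =\<^sub>f Phi m n v"
  by (induction n) (auto simp: phi_resp)

lemma Phi_app: "Phi m n (u @ v) =\<^sub>f Phi m n u @ Phi m n v"
proof (induction n)
  case 0 then show ?case by simp
next
  case (Suc n)
  have "Phi m (Suc n) (u @ v) = phi m (Phi m n u @ Phi m n v)"
    using phi_resp[OF Suc] by simp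
  also have "\<dots> =\<^sub>f Phi m (Suc n) u @ Phi m (Suc n) v" using phi_app by simp
  finally show ?case .
qed

lemma Phi_inv: "Phi m n (inv_word u) =\<^sub>f inv_word (Phi m n u)"
proof (induction n)
  case 0 then show ?case by simp
next
  case (Suc n)
  have "Phi m (Suc n) (inv_word u) = phi m (inv_word (Phi m n u))"
    using phi_resp[OF Suc] by simp
  also have "\<dots> =\<^sub>f inv_word (Phi m (Suc n) u)" using phi_inv by simp
  finally show ?case .
qed

lemma concat_feq: "(\<And>x. x \<in> set xs \<Longrightarrow> f x =\<^sub>f g x) \<Longrightarrow> concat (map f xs) =\<^sub>f concat (map g xs)"
  by (induction xs) (auto intro: feq_app)

lemma Phi_concat: "Phi m n (concat (map f xs)) =\<^sub>f concat (map (\<lambda>x. Phi m n (f x)) xs)"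
proof (induction xs)
  case Nil
  have "Phi m n [] = []" by (induction n) (simp_all add: phi_def)
  then show ?case by simp
next
  case (Cons x xs)
  have "Phi m n (concat (map f (x # xs))) =\<^sub>f Phi m n (f x) @ Phi m n (concat (map f xs))"
    by (simp add: Phi_app)
  also have "\<dots> =\<^sub>f Phi m n (f x) @ concat (map (\<lambda>x. Phi m n (f x)) xs)"
    using feq_ctx[OF Cons, of "Phi m n (f x)" "[]"] by simp
  finally show ?case by simp
qed

lemma phi_gen_single: "phi m [(g, False)] = reduce (phi_gen m g)"
  by (simp add: phi_def phi_letter_def)



definition pw :: "nat \<Rightarrow> nat \<Rightarrow> word" where "pw i n = replicate n (GA i, False)"
definition Ql :: "nat \<Rightarrow> nat \<Rightarrow> word" where "Ql i n = concat (map (\<lambda>l. pw l n) [1..<i])"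
definition Pl :: "nat \<Rightarrow> word" where "Pl i = map (\<lambda>l. (GA l, False)) [1..<i]"
definition R :: "nat \<Rightarrow> nat \<Rightarrow> nat \<Rightarrow> word" where "R m j n = concat (map (\<lambda>l. pw l n) [j..<m+1])"

lemma Phi_Nil[simp]: "Phi m n [] = []" by (induction n) (simp_all add: phi_def)

lemma Ql_0[simp]: "Ql i 0 = []" by (simp add: Ql_def pw_def)

lemma Ql_Suc: "1 \<le> i \<Longrightarrow> Ql (Suc i) n = Ql i n @ pw i n" by (simp add: Ql_def)
lemma Pl_Suc: "1 \<le> i \<Longrightarrow> Pl (Suc i) = Pl i @ [(GA i, False)]" by (simp add: Pl_def)
lemma Ql_le1: "i \<le> 1 \<Longrightarrow> Ql i n = []" by (simp add: Ql_def)
lemma Pl_le1: "i \<le> 1 \<Longrightarrow> Pl i = []" by (simp add: Pl_def)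

lemma phi_gen_GA: "phi_gen m (GA i) = Pl i @ [(GA i, False)] @ inv_word (Pl i)"
  by (simp add: phi_gen_def Pl_def)

lemma phi_gen_GB: "phi_gen m (GB j) = Pl (m+1) @ concat (map (\<lambda>l. [(GB l, False)]) [1..<j+1]) @ inv_word (Pl j)"
  by (simp add: phi_gen_def Pl_def map_concat[symmetric])

lemma Q_split: "1 \<le> j \<Longrightarrow> j \<le> m+1 \<Longrightarrow> Ql (m+1) n = Ql j n @ R m j n"
proof -
  assume a: "1 \<le> j" "j \<le> m+1"
  then have "[1..<m+1] = [1..<j] @ [j..<m+1]"
    by (metis le_add_diff_inverse upt_add_eq_append)
  then show ?thesis by (simp add: Ql_def R_def)
qed

lemma G_step:
  assumes F: "\<And>i. Phi m n [(GA i, False)] =\<^sub>f Ql i n @ [(GA i, False)] @ inv_word (Ql i n)"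
  shows "Phi m n (Pl i) @ Ql i n =\<^sub>f Ql i (Suc n)"
proof (induction i)
  case 0 then show ?case by (simp add: Pl_le1 Ql_le1 Phi_concat)
next
  case (Suc i)
  show ?case
  proof (cases "i = 0")
    case True
    have "Phi m n [] = []" by (induction n) (simp_all add: phi_def)
    then show ?thesis using True by (simp add: Pl_le1 Ql_le1)
  next
    case False
    then have i1: "1 \<le> i" by simp
    let ?A = "[(GA i, False)]"
    have "Phi m n (Pl (Suc i)) @ Ql (Suc i) n = Phi m n (Pl i @ ?A) @ Ql i n @ pw i n"
      using i1 by (simp add: Pl_Suc Ql_Suc)
    also have "\<dots> =\<^sub>f (Phi m n (Pl i) @ Phi m n ?A) @ Ql i n @ pw i n"
      using feq_ctx[OF Phi_app[of n m "Pl i" ?A], of "[]" "Ql i n @ pw i n"] by simp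
    also have "\<dots> =\<^sub>f Phi m n (Pl i) @ (Ql i n @ ?A @ inv_word (Ql i n)) @ Ql i n @ pw i n"
      using feq_ctx[OF F[of i], of "Phi m n (Pl i)" "Ql i n @ pw i n"] by simp
    also have "\<dots> =\<^sub>f Phi m n (Pl i) @ Ql i n @ ?A @ pw i n"
      using feq_cancel_left[of "Phi m n (Pl i) @ Ql i n @ ?A" "Ql i n" "pw i n"] by simp
    also have "\<dots> =\<^sub>f Ql i (Suc n) @ ?A @ pw i n"
      using feq_ctx[OF Suc, of "[]" "?A @ pw i n"] by simp
    also have "\<dots> = Ql (Suc i) (Suc n)"
      using i1 by (simp add: Ql_Suc pw_def replicate_append_same)
    finally show ?thesis .
  qed
qed

lemma F_all: "Phi m n [(GA i, False)] =\<^sub>f Ql i n @ [(GA i, False)] @ inv_word (Ql i n)"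
proof (induction n arbitrary: i)
  case 0 then show ?case by simp
next
  case (Suc n)
  let ?A = "[(GA i, False)]"
  have G: "Phi m n (Pl i) @ Ql i n =\<^sub>f Ql i (Suc n)" by (rule G_step[OF Suc])
  have "Phi m (Suc n) ?A = Phi m n (reduce (Pl i @ ?A @ inv_word (Pl i)))"
    unfolding Phi_Suc phi_gen_single phi_gen_GA by simp
  also have "\<dots> =\<^sub>f Phi m n (Pl i @ ?A @ inv_word (Pl i))"
    by (rule Phi_resp) simp
  also have "\<dots> =\<^sub>f Phi m n (Pl i) @ Phi m n (?A @ inv_word (Pl i))"
    by (rule Phi_app)
  also have "\<dots> =\<^sub>f Phi m n (Pl i) @ (Phi m n ?A @ Phi m n (inv_word (Pl i)))"
    using feq_ctx[OF Phi_app[of n m ?A "inv_word (Pl i)"], of "Phi m n (Pl i)" "[]"] by simp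
  also have "\<dots> =\<^sub>f Phi m n (Pl i) @ (Ql i n @ ?A @ inv_word (Ql i n)) @ Phi m n (inv_word (Pl i))"
    using feq_ctx[OF Suc[of i], of "Phi m n (Pl i)" "Phi m n (inv_word (Pl i))"] by simp
  also have "\<dots> =\<^sub>f Phi m n (Pl i) @ (Ql i n @ ?A @ inv_word (Ql i n)) @ inv_word (Phi m n (Pl i))"
    using feq_ctx[OF Phi_inv[of n m "Pl i"], of "Phi m n (Pl i) @ (Ql i n @ ?A @ inv_word (Ql i n))" "[]"] by simp
  also have "\<dots> = (Phi m n (Pl i) @ Ql i n) @ ?A @ inv_word (Phi m n (Pl i) @ Ql i n)"
    by simp
  also have "\<dots> =\<^sub>f Ql i (Suc n) @ ?A @ inv_word (Phi m n (Pl i) @ Ql i n)"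
    using feq_ctx[OF G, of "[]"] by simp
  also have "\<dots> =\<^sub>f Ql i (Suc n) @ ?A @ inv_word (Ql i (Suc n))"
    using feq_ctx[OF feq_inv[OF G], of "Ql i (Suc n) @ ?A" "[]"] by simp
  finally show ?case .
qed

lemma G_all: "Phi m n (Pl i) @ Ql i n =\<^sub>f Ql i (Suc n)"
  by (rule G_step[OF F_all])

lemma Phi_Pl: "Phi m n (Pl i) =\<^sub>f Ql i (Suc n) @ inv_word (Ql i n)"
proof -
  have "Phi m n (Pl i) =\<^sub>f Phi m n (Pl i) @ Ql i n @ inv_word (Ql i n)"
    using feq_cancel_right[of "Phi m n (Pl i)" "Ql i n" "[]"] by (simp add: feq_sym)
  also have "\<dots> =\<^sub>f Ql i (Suc n) @ inv_word (Ql i n)"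
    using feq_ctx[OF G_all[of n m i], of "[]" "inv_word (Ql i n)"] by simp
  finally show ?thesis .
qed



primrec W :: "nat \<Rightarrow> nat \<Rightarrow> nat \<Rightarrow> word" where
  "W m 0 j = [(GB j, False)]"
| "W m (Suc n) j = concat (map (\<lambda>l. (if l = 1 then [] else R m (l-1) n) @ W m n l) [1..<Suc j])"

lemma W_Suc_1: "W m (Suc n) 1 = W m n 1" by simp
lemma W_Suc_step: "1 \<le> j \<Longrightarrow> W m (Suc n) (Suc j) = W m (Suc n) j @ R m j n @ W m n (Suc j)"
  by simp

lemma E_lemma:
  "1 \<le> j \<Longrightarrow> j \<le> m+1 \<Longrightarrow>
   concat (map (\<lambda>l. Ql (m+1) n @ W m n l @ inv_word (Ql l n)) [1..<Suc j])
     =\<^sub>f Ql (m+1) n @ W m (Suc n) j @ inv_word (Ql j n)"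
proof (induction j)
  case 0 then show ?case by simp
next
  case (Suc j)
  let ?Q = "Ql (m+1) n"
  show ?case
  proof (cases "j = 0")
    case True then show ?thesis by (simp add: Ql_le1)
  next
    case False
    then have j1: "1 \<le> j" and jm: "j \<le> m+1" using Suc.prems by auto
    have "concat (map (\<lambda>l. ?Q @ W m n l @ inv_word (Ql l n)) [1..<Suc (Suc j)])
        = concat (map (\<lambda>l. ?Q @ W m n l @ inv_word (Ql l n)) [1..<Suc j])
          @ (?Q @ W m n (Suc j) @ inv_word (Ql (Suc j) n))" by simp
    also have "\<dots> =\<^sub>f (?Q @ W m (Suc n) j @ inv_word (Ql j n)) @ (?Q @ W m n (Suc j) @ inv_word (Ql (Suc j) n))"
      using feq_ctx[OF Suc.IH[OF j1 jm], of "[]"] by simp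
    also have "\<dots> = ?Q @ W m (Suc n) j @ inv_word (Ql j n) @ Ql j n @ R m j n @ W m n (Suc j) @ inv_word (Ql (Suc j) n)"
      using Q_split[OF j1 jm, of n] by simp
    also have "\<dots> =\<^sub>f ?Q @ W m (Suc n) j @ R m j n @ W m n (Suc j) @ inv_word (Ql (Suc j) n)"
      using feq_cancel_left[of "?Q @ W m (Suc n) j" "Ql j n" "R m j n @ W m n (Suc j) @ inv_word (Ql (Suc j) n)"] by simp
    also have "\<dots> = ?Q @ W m (Suc n) (Suc j) @ inv_word (Ql (Suc j) n)"
      using W_Suc_step[OF j1, of m n] by simp
    finally show ?thesis .
  qed
qed

lemma H_all:
  "1 \<le> j \<Longrightarrow> j \<le> m \<Longrightarrow> Phi m n [(GB j, False)] =\<^sub>f Ql (m+1) n @ W m n j @ inv_word (Ql j n)"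
proof (induction n arbitrary: j)
  case 0 then show ?case by simp
next
  case (Suc n)
  let ?Bs = "concat (map (\<lambda>l. [(GB l, False)]) [1..<Suc j])"
  let ?Q = "Ql (m+1) n" and ?Q' = "Ql (m+1) (Suc n)"
  have "Phi m (Suc n) [(GB j, False)] = Phi m n (reduce (Pl (m+1) @ ?Bs @ inv_word (Pl j)))"
    unfolding Phi_Suc phi_gen_single phi_gen_GB by simp
  also have "\<dots> =\<^sub>f Phi m n (Pl (m+1) @ ?Bs @ inv_word (Pl j))"
    by (rule Phi_resp) simp
  also have "\<dots> =\<^sub>f Phi m n (Pl (m+1)) @ Phi m n (?Bs @ inv_word (Pl j))"
    by (rule Phi_app)
  also have "\<dots> =\<^sub>f Phi m n (Pl (m+1)) @ Phi m n ?Bs @ Phi m n (inv_word (Pl j))"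
    using feq_ctx[OF Phi_app[of n m ?Bs "inv_word (Pl j)"], of "Phi m n (Pl (m+1))" "[]"] by simp
  also have "\<dots> =\<^sub>f (?Q' @ inv_word ?Q) @
      concat (map (\<lambda>l. ?Q @ W m n l @ inv_word (Ql l n)) [1..<Suc j]) @
      (Ql j n @ inv_word (Ql j (Suc n)))"
  proof (intro feq_app)
    show "Phi m n (Pl (m+1)) =\<^sub>f ?Q' @ inv_word ?Q" by (rule Phi_Pl)
    have "Phi m n ?Bs =\<^sub>f concat (map (\<lambda>l. Phi m n [(GB l, False)]) [1..<Suc j])"
      by (rule Phi_concat)
    also have "\<dots> =\<^sub>f concat (map (\<lambda>l. ?Q @ W m n l @ inv_word (Ql l n)) [1..<Suc j])"
      proof (rule concat_feq)
      fix l assume "l \<in> set [1..<Suc j]"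
      then have "1 \<le> l" "l \<le> m" using Suc.prems by auto
      then show "Phi m n [(GB l, False)] =\<^sub>f ?Q @ W m n l @ inv_word (Ql l n)" by (rule Suc.IH)
    qed
    finally show "Phi m n ?Bs =\<^sub>f concat (map (\<lambda>l. ?Q @ W m n l @ inv_word (Ql l n)) [1..<Suc j])" .
    have "Phi m n (inv_word (Pl j)) =\<^sub>f inv_word (Phi m n (Pl j))" by (rule Phi_inv)
    also have "\<dots> =\<^sub>f inv_word (Ql j (Suc n) @ inv_word (Ql j n))" by (rule feq_inv[OF Phi_Pl])
    finally show "Phi m n (inv_word (Pl j)) =\<^sub>f Ql j n @ inv_word (Ql j (Suc n))" by simp
  qed
  also have "\<dots> =\<^sub>f (?Q' @ inv_word ?Q) @ (?Q @ W m (Suc n) j @ inv_word (Ql j n)) @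
      (Ql j n @ inv_word (Ql j (Suc n)))"
    using feq_ctx[OF E_lemma[of j m n], of "?Q' @ inv_word ?Q" "Ql j n @ inv_word (Ql j (Suc n))"] Suc.prems by simp
  also have "\<dots> = ?Q' @ inv_word ?Q @ ?Q @ (W m (Suc n) j @ inv_word (Ql j n) @ Ql j n @ inv_word (Ql j (Suc n)))"
    by simp
  also have "\<dots> =\<^sub>f ?Q' @ (W m (Suc n) j @ inv_word (Ql j n) @ Ql j n @ inv_word (Ql j (Suc n)))"
    by (rule feq_cancel_left)
  also have "\<dots> = (?Q' @ W m (Suc n) j) @ inv_word (Ql j n) @ Ql j n @ inv_word (Ql j (Suc n))"
    by simp
  also have "\<dots> =\<^sub>f (?Q' @ W m (Suc n) j) @ inv_word (Ql j (Suc n))"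
    by (rule feq_cancel_left)
  finally show ?case by simp
qed



lemma len_pw[simp]: "length (pw i n) = n" by (simp add: pw_def)
lemma len_Ql: "length (Ql i n) = (i - 1) * n"
  by (simp add: Ql_def length_concat comp_def sum_list_triv)
lemma len_R: "length (R m j n) = (m + 1 - j) * n"
  by (simp add: R_def length_concat comp_def sum_list_triv Suc_diff_le)

lemma bern: "(a::nat) ^ Suc i + Suc i * a ^ i \<le> (a + 1) ^ Suc i"
proof (induction i)
  case 0 then show ?case by simp
next
  case (Suc i)
  have "(a + 1) ^ Suc (Suc i) = (a + 1) * (a + 1) ^ Suc i" by simp
  also have "\<dots> \<ge> (a + 1) * (a ^ Suc i + Suc i * a ^ i)"
    using Suc by (intro mult_le_mono2)
  finally have h: "(a + 1) * (a ^ Suc i + Suc i * a ^ i) \<le> (a + 1) ^ Suc (Suc i)" .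
  have "a ^ Suc (Suc i) + Suc (Suc i) * a ^ Suc i \<le> (a + 1) * (a ^ Suc i + Suc i * a ^ i)"
    by (simp add: algebra_simps)
  then show ?case using h by linarith
qed

lemma LS:
  assumes IH: "\<And>l. length (W m n l) \<le> (m+1) ^ l * (n+1) ^ l"
  shows "length (W m (Suc n) (Suc i)) \<le> (m+1) ^ Suc i * (n+1) ^ Suc i + Suc i * ((m+1) ^ Suc i * (n+1) ^ i)"
proof (induction i)
  case 0
  show ?case using IH[of 1] by simp
next
  case (Suc i)
  define M where "M = m + 1"
  define a where "a = n + 1"
  have M1: "1 \<le> M" and a1: "1 \<le> a" by (simp_all add: M_def a_def)
  have len: "length (W m (Suc n) (Suc (Suc i))) = length (W m (Suc n) (Suc i)) + length (R m (Suc i) n) + length (W m n (Suc (Suc i)))"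
    using W_Suc_step[of "Suc i" m n] by simp
  have r: "length (R m (Suc i) n) \<le> m * a ^ Suc i"
  proof -
    have "length (R m (Suc i) n) \<le> m * n" by (simp add: len_R)
    also have "\<dots> \<le> m * a ^ Suc i"
    proof -
      have "n \<le> a" by (simp add: a_def)
      also have "a \<le> a ^ Suc i" using a1 by simp
      finally show ?thesis by simp
    qed
    finally show ?thesis .
  qed
  have s1: "Suc i * (M ^ Suc i * a ^ i) \<le> Suc i * (M ^ Suc (Suc i) * a ^ Suc i)"
  proof (intro mult_le_mono2 mult_le_mono)
    show "M ^ Suc i \<le> M ^ Suc (Suc i)" using M1 by (intro power_increasing) auto
    show "a ^ i \<le> a ^ Suc i" using a1 by (intro power_increasing) auto
  qed
  have s2: "M ^ Suc i * a ^ Suc i + m * a ^ Suc i \<le> M ^ Suc (Suc i) * a ^ Suc i"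
  proof -
    have "M ^ Suc i + m \<le> M ^ Suc i * M"
    proof -
      have "m \<le> M ^ Suc i * m" using M1 by simp
      then show ?thesis by (simp add: M_def algebra_simps)
    qed
    then have "(M ^ Suc i + m) * a ^ Suc i \<le> (M ^ Suc i * M) * a ^ Suc i" by (rule mult_le_mono1)
    then show ?thesis by (simp add: algebra_simps)
  qed
  have w: "length (W m n (Suc (Suc i))) \<le> M ^ Suc (Suc i) * a ^ Suc (Suc i)"
    using IH[of "Suc (Suc i)"] by (simp add: M_def a_def)
  have ih: "length (W m (Suc n) (Suc i)) \<le> M ^ Suc i * a ^ Suc i + Suc i * (M ^ Suc i * a ^ i)"
    using Suc by (simp add: M_def a_def)
  have "length (W m (Suc n) (Suc (Suc i))) \<le> M ^ Suc (Suc i) * a ^ Suc (Suc i) + Suc (Suc i) * (M ^ Suc (Suc i) * a ^ Suc i)"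
    using len r s1 s2 w ih by simp
  then show ?case by (simp add: M_def a_def)
qed

lemma LW: "length (W m n j) \<le> (m+1) ^ j * (n+1) ^ j"
proof (induction n arbitrary: j)
  case 0 then show ?case by simp
next
  case (Suc n)
  show ?case
  proof (cases j)
    case 0 then show ?thesis by simp
  next
    case (Suc i)
    have "length (W m (Suc n) (Suc i)) \<le> (m+1) ^ Suc i * (n+1) ^ Suc i + Suc i * ((m+1) ^ Suc i * (n+1) ^ i)"
      by (rule LS) (rule Suc.IH)
    also have "\<dots> = (m+1) ^ Suc i * ((n+1) ^ Suc i + Suc i * (n+1) ^ i)"
      by (simp add: algebra_simps)
    also have "\<dots> \<le> (m+1) ^ Suc i * ((n+1) + 1) ^ Suc i"
      by (intro mult_le_mono2 bern)
    finally show ?thesis using Suc by simp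
  qed
qed

lemma word_norm_bound:
  assumes "1 \<le> k" "k \<le> m"
  shows "word_norm (Phi m n [(GB k, False)]) \<le> m * n + (m+1) ^ k * (n+1) ^ k + (k - 1) * n"
proof -
  have "reduce (Phi m n [(GB k, False)]) = reduce (Ql (m+1) n @ W m n k @ inv_word (Ql k n))"
    using H_all[OF assms, of n] by (simp add: feq_def)
  then have "word_norm (Phi m n [(GB k, False)]) \<le> length (Ql (m+1) n @ W m n k @ inv_word (Ql k n))"
    unfolding word_norm_def by (metis length_reduce)
  also have "\<dots> \<le> m * n + (m+1) ^ k * (n+1) ^ k + (k - 1) * n"
    using LW[of m n k] by (simp add: len_Ql)
  finally show ?thesis .
qed



lemma ab_Nil[simp]: "ab [] g = 0" by (simp add: ab_def)
lemma ab_Cons: "ab (x # w) g = ab_letter x g + ab w g" by (simp add: ab_def)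
lemma ab_append: "ab (u @ v) g = ab u g + ab v g" by (simp add: ab_def)

lemma ab_letter_inv: "ab_letter (inv_letter x) g = - ab_letter x g"
  by (simp add: ab_letter_def inv_letter_def)

lemma ab_reduce: "ab (reduce w) g = ab w g"
proof (induction w)
  case Nil then show ?case by simp
next
  case (Cons x xs)
  show ?case
  proof (cases "reduce xs")
    case Nil then show ?thesis using Cons.IH by (simp add: ab_Cons)
  next
    case (Cons y ys)
    note Cons2 = this
    show ?thesis
    proof (cases "y = inv_letter x")
      case True
      then have "ab (reduce (x # xs)) g = ab ys g" using Cons2 by simp
      also have "\<dots> = ab_letter x g + ab (y # ys) g" using True by (simp add: ab_Cons ab_letter_inv)
      finally show ?thesis using Cons.IH Cons2 by (simp add: ab_Cons)
    next
      case False
      then show ?thesis using Cons.IH Cons2 by (simp add: ab_Cons)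
    qed
  qed
qed

lemma ab_inv: "ab (inv_word u) g = - ab u g"
  by (induction u) (simp_all add: inv_word_Cons ab_append ab_Cons ab_letter_inv)

lemma finite_gens[simp]: "finite (gens m k)" by (simp add: gens_def)

lemma abs_ab_letter: "\<bar>ab_letter x g\<bar> = (if g = fst x then 1 else 0)"
  by (simp add: ab_letter_def)

lemma norm1_le_length: "norm1 m k (ab w) \<le> int (length w)"
proof (induction w)
  case Nil then show ?case by (simp add: norm1_def)
next
  case (Cons x w)
  have "norm1 m k (ab (x # w)) \<le> (\<Sum>g\<in>gens m k. \<bar>ab_letter x g\<bar>) + norm1 m k (ab w)"
    unfolding norm1_def ab_Cons sum.distrib[symmetric] by (intro sum_mono abs_triangle_ineq)
  also have "(\<Sum>g\<in>gens m k. \<bar>ab_letter x g\<bar>) \<le> 1"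
    unfolding abs_ab_letter by (simp add: sum.delta)
  finally show ?case using Cons by simp
qed

lemma norm1_le_word_norm: "norm1 m k (ab w) \<le> int (word_norm w)"
proof -
  have "ab w = ab (reduce w)" by (simp add: ab_reduce fun_eq_iff)
  then show ?thesis unfolding word_norm_def using norm1_le_length by metis
qed

lemma letters_phi_gen:
  assumes "k \<le> m" "h \<in> gens m k"
  shows "fst ` set (phi_gen m h) \<subseteq> gens m k"
  using assms unfolding gens_def phi_gen_def inv_word_def inv_letter_def
  by (auto split: gen.splits)

lemma letters_phi_letter:
  assumes "k \<le> m" "fst x \<in> gens m k"
  shows "fst ` set (phi_letter m x) \<subseteq> gens m k"
  using letters_phi_gen[OF assms(1,2)]
  unfolding phi_letter_def inv_word_def inv_letter_def by auto

lemma letters_phi: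
  assumes "k \<le> m" "fst ` set w \<subseteq> gens m k"
  shows "fst ` set (phi m w) \<subseteq> gens m k"
proof -
  have "fst ` set (C m w) \<subseteq> gens m k"
    using assms letters_phi_letter[OF assms(1)] by (fastforce simp: C_def)
  then show ?thesis unfolding phi_C using set_reduce by blast
qed

lemma letters_Phi:
  assumes "k \<le> m" "fst ` set w \<subseteq> gens m k"
  shows "fst ` set (Phi m n w) \<subseteq> gens m k"
proof (induction n)
  case 0 then show ?case using assms by simp
next
  case (Suc n) then show ?case using letters_phi[OF assms(1)] by simp
qed

lemma ab_phi_letter: "ab (phi_letter m x) g = (if snd x then -1 else 1) * ab (phi_gen m (fst x)) g"
  by (simp add: phi_letter_def ab_inv)

lemma ab_C:
  assumes "fst ` set w \<subseteq> gens m k"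
  shows "ab (C m w) g = phi_ab m k (ab w) g"
  using assms
proof (induction w)
  case Nil then show ?case by (simp add: phi_ab_def)
next
  case (Cons x w)
  have "phi_ab m k (ab (x # w)) g
      = (\<Sum>h\<in>gens m k. ab_letter x h * ab (phi_gen m h) g) + phi_ab m k (ab w) g"
    unfolding phi_ab_def ab_Cons by (simp add: algebra_simps sum.distrib)
  also have "(\<Sum>h\<in>gens m k. ab_letter x h * ab (phi_gen m h) g)
      = (\<Sum>h\<in>gens m k. if h = fst x then (if snd x then -1 else 1) * ab (phi_gen m (fst x)) g else 0)"
    by (rule sum.cong) (auto simp: ab_letter_def)
  also have "\<dots> = (if snd x then -1 else 1) * ab (phi_gen m (fst x)) g"
    using Cons.prems by (simp add: sum.delta')
  finally show ?case using Cons by (simp add: C_Cons ab_append ab_phi_letter)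
qed

lemma ab_phi:
  assumes "fst ` set w \<subseteq> gens m k"
  shows "ab (phi m w) g = phi_ab m k (ab w) g"
  unfolding phi_C ab_reduce by (rule ab_C[OF assms])

lemma ab_Phi:
  assumes "k \<le> m" "fst ` set w \<subseteq> gens m k"
  shows "ab (Phi m n w) = (phi_ab m k ^^ n) (ab w)"
proof (induction n)
  case 0 then show ?case by simp
next
  case (Suc n)
  have "ab (Phi m (Suc n) w) = phi_ab m k (ab (Phi m n w))"
    using ab_phi[OF letters_Phi[OF assms, of n]] by (simp add: fun_eq_iff)
  then show ?case using Suc by simp
qed



lemma ab_pos: "(\<forall>x\<in>set w. snd x = False) \<Longrightarrow> ab w g \<ge> 0"
  by (induction w) (auto simp: ab_Cons ab_letter_def)

lemma ab_pos1: "(\<forall>x\<in>set w. snd x = False) \<Longrightarrow> (g, False) \<in> set w \<Longrightarrow> ab w g \<ge> 1"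
proof (induction w)
  case Nil then show ?case by simp
next
  case (Cons x w)
  have "ab w g \<ge> 0" using Cons.prems by (intro ab_pos) auto
  moreover have "ab_letter x g \<ge> 0" using Cons.prems by (auto simp: ab_letter_def)
  ultimately show ?case using Cons by (auto simp: ab_Cons ab_letter_def)
qed

definition cc :: "nat \<Rightarrow> gen \<Rightarrow> gen \<Rightarrow> int" where "cc m h g = ab (phi_gen m h) g"

lemma cc_GA: "cc m (GA i) g = (if g = GA i then 1 else 0)"
  by (simp add: cc_def phi_gen_GA ab_append ab_inv ab_Cons ab_letter_def)

lemma cc_GB:
  assumes "1 \<le> j" "j \<le> m"
  shows "cc m (GB j) g = ab (map (\<lambda>l. (GA l, False)) [j..<m+1] @ map (\<lambda>l. (GB l, False)) [1..<Suc j]) g"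
proof -
  have "[1..<m+1] = [1..<j] @ [j..<m+1]" using assms
    by (metis le_SucI le_add_diff_inverse upt_add_eq_append Suc_eq_plus1)
  then have "Pl (m+1) = Pl j @ map (\<lambda>l. (GA l, False)) [j..<m+1]" by (simp add: Pl_def)
  then show ?thesis
    by (simp add: cc_def phi_gen_GB ab_append ab_inv concat_map_singleton)
qed

lemma cc_nonneg:
  assumes "k \<le> m" "h \<in> gens m k"
  shows "cc m h g \<ge> 0"
proof -
  { fix i assume "h = GA i" then have ?thesis by (simp add: cc_GA) }
  moreover
  { fix j assume "h = GB j"
    then have "1 \<le> j" "j \<le> m" using assms by (auto simp: gens_def)
    then have ?thesis using \<open>h = GB j\<close> by (simp add: cc_GB) (intro ab_pos, auto) }
  ultimately show ?thesis by (cases h) auto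
qed

lemma cc_GB_GB: "1 \<le> l \<Longrightarrow> l \<le> j \<Longrightarrow> j \<le> m \<Longrightarrow> cc m (GB j) (GB l) \<ge> 1"
  by (simp add: cc_GB) (rule ab_pos1, auto)

lemma cc_GB1_GAm: "1 \<le> m \<Longrightarrow> cc m (GB 1) (GA m) \<ge> 1"
  by (simp add: cc_GB) (rule ab_pos1, auto)

definition vv :: "nat \<Rightarrow> nat \<Rightarrow> nat \<Rightarrow> gen \<Rightarrow> int" where
  "vv m k n = (phi_ab m k ^^ n) (ab [(GB k, False)])"

lemma vv_Suc: "vv m k (Suc n) g = (\<Sum>h\<in>gens m k. vv m k n h * cc m h g)"
  by (simp add: vv_def phi_ab_def cc_def)

lemma vv_0: "vv m k 0 g = (if g = GB k then 1 else 0)"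
  by (simp add: vv_def ab_Cons ab_letter_def)

lemma vv_nonneg: assumes "k \<le> m" shows "vv m k n g \<ge> 0"
proof (induction n arbitrary: g)
  case 0 then show ?case by (simp add: vv_0)
next
  case (Suc n)
  show ?case unfolding vv_Suc
    by (intro sum_nonneg mult_nonneg_nonneg Suc cc_nonneg[OF assms])
qed

lemma vv_ge2:
  assumes "k \<le> m" "h0 \<in> gens m k" "h1 \<in> gens m k" "h0 \<noteq> h1"
  shows "vv m k (Suc n) g \<ge> vv m k n h0 * cc m h0 g + vv m k n h1 * cc m h1 g"
proof -
  have "(\<Sum>h\<in>{h0,h1}. vv m k n h * cc m h g) \<le> (\<Sum>h\<in>gens m k. vv m k n h * cc m h g)"
    using assms by (intro sum_mono2) (auto intro!: mult_nonneg_nonneg vv_nonneg cc_nonneg)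
  then show ?thesis using assms(4) by (simp add: vv_Suc)
qed

lemma vv_ge1:
  assumes "k \<le> m" "h0 \<in> gens m k"
  shows "vv m k (Suc n) g \<ge> vv m k n h0 * cc m h0 g"
proof -
  have "(\<Sum>h\<in>{h0}. vv m k n h * cc m h g) \<le> (\<Sum>h\<in>gens m k. vv m k n h * cc m h g)"
    using assms by (intro sum_mono2) (auto intro!: mult_nonneg_nonneg vv_nonneg cc_nonneg)
  then show ?thesis by (simp add: vv_Suc)
qed

lemma mul_ge: "(0::int) \<le> a \<Longrightarrow> 1 \<le> c \<Longrightarrow> a \<le> a * c"
  by (simp add: mult_le_cancel_left1)

lemma vv_B:
  assumes "1 \<le> k" "k \<le> m"
  shows "1 \<le> l \<Longrightarrow> l \<le> k \<Longrightarrow> vv m k n (GB l) \<ge> int (n choose (k - l))"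
proof (induction n arbitrary: l)
  case 0 then show ?case by (simp add: vv_0)
next
  case (Suc n)
  have inG: "\<And>j. 1 \<le> j \<Longrightarrow> j \<le> k \<Longrightarrow> GB j \<in> gens m k" by (simp add: gens_def)
  show ?case
  proof (cases "l = k")
    case True
    have "vv m k (Suc n) (GB k) \<ge> vv m k n (GB k) * cc m (GB k) (GB k)"
      by (rule vv_ge1[OF assms(2) inG[OF assms(1) order.refl]])
    moreover have "vv m k n (GB k) * cc m (GB k) (GB k) \<ge> vv m k n (GB k)"
      using True assms by (intro mul_ge vv_nonneg cc_GB_GB) auto
    moreover have "vv m k n (GB k) \<ge> 1" using Suc.IH[of k] assms by simp
    ultimately have "vv m k (Suc n) (GB k) \<ge> 1" by linarith
    then show ?thesis using True by simp
  next
    case False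
    then have lk: "l < k" using Suc.prems by simp
    have "vv m k (Suc n) (GB l) \<ge> vv m k n (GB l) * cc m (GB l) (GB l) + vv m k n (GB (Suc l)) * cc m (GB (Suc l)) (GB l)"
      using Suc.prems lk by (intro vv_ge2[OF assms(2)] inG) auto
    moreover have "vv m k n (GB l) * cc m (GB l) (GB l) \<ge> vv m k n (GB l)"
      using Suc.prems assms by (intro mul_ge vv_nonneg cc_GB_GB) auto
    moreover have "vv m k n (GB (Suc l)) * cc m (GB (Suc l)) (GB l) \<ge> vv m k n (GB (Suc l))"
      using Suc.prems assms lk by (intro mul_ge vv_nonneg cc_GB_GB) auto
    moreover have "vv m k n (GB l) \<ge> int (n choose (k - l))" using Suc.IH Suc.prems by simp
    moreover have "vv m k n (GB (Suc l)) \<ge> int (n choose (k - Suc l))" using Suc.IH Suc.prems lk by simp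
    moreover have "Suc n choose (k - l) = (n choose (k - Suc l)) + (n choose (k - l))"
    proof -
      have "k - l = Suc (k - Suc l)" using lk by simp
      then show ?thesis by simp
    qed
    ultimately show ?thesis by linarith
  qed
qed

lemma vv_A:
  assumes "1 \<le> k" "k \<le> m"
  shows "vv m k n (GA m) \<ge> int (n choose k)"
proof (induction n)
  case 0 then show ?case using assms by (simp add: vv_0)
next
  case (Suc n)
  have g1: "GA m \<in> gens m k" "GB 1 \<in> gens m k" using assms by (auto simp: gens_def)
  have "vv m k (Suc n) (GA m) \<ge> vv m k n (GA m) * cc m (GA m) (GA m) + vv m k n (GB 1) * cc m (GB 1) (GA m)"
    by (rule vv_ge2[OF assms(2) g1]) simp
  moreover have "cc m (GA m) (GA m) = 1" by (simp add: cc_GA)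
  moreover have "vv m k n (GB 1) * cc m (GB 1) (GA m) \<ge> vv m k n (GB 1)"
    using assms by (intro mul_ge vv_nonneg cc_GB1_GAm) auto
  moreover have "vv m k n (GB 1) \<ge> int (n choose (k - 1))" using vv_B[OF assms, of 1 n] assms by simp
  moreover have "Suc n choose k = (n choose (k - 1)) + (n choose k)"
  proof -
    have "k = Suc (k - 1)" using assms by simp
    then show ?thesis by (metis binomial_Suc_Suc add.commute)
  qed
  ultimately show ?case using Suc by simp
qed



lemma pow_bound1: "((n::nat) + 1) ^ k \<le> 2 ^ k * n ^ k + 1"
proof (cases "n = 0")
  case True then show ?thesis by simp
next
  case False
  then have "n + 1 \<le> 2 * n" by simp
  then have "(n + 1) ^ k \<le> (2 * n) ^ k" by (rule power_mono) simp
  then show ?thesis by (simp add: power_mult_distrib)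
qed

lemma n_le_pow: "1 \<le> k \<Longrightarrow> (n::nat) \<le> n ^ k"
proof (cases "n = 0")
  case False
  assume "1 \<le> k"
  then have "n ^ 1 \<le> n ^ k" using False by (intro power_increasing) auto
  then show ?thesis by simp
qed simp

lemma upper_nat:
  assumes "1 \<le> k" "k \<le> m"
  shows "word_norm (Phi m n [(GB k, False)]) \<le> (m + k + (m+1)^k * 2^k) * n ^ k + (m+1)^k"
proof -
  have "word_norm (Phi m n [(GB k, False)]) \<le> m * n + (m+1) ^ k * (n+1) ^ k + (k - 1) * n"
    by (rule word_norm_bound[OF assms])
  also have "\<dots> \<le> m * n ^ k + (m+1) ^ k * (2 ^ k * n ^ k + 1) + k * n ^ k"
    using n_le_pow[OF assms(1), of n] pow_bound1[of n k]
    by (intro add_mono mult_le_mono) auto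
  also have "\<dots> = (m + k + (m+1)^k * 2^k) * n ^ k + (m+1)^k"
    by (simp add: algebra_simps)
  finally show ?thesis .
qed

lemma lower_real:
  assumes "1 \<le> k"
  shows "real n ^ k \<le> real k ^ k * real (n choose k) + real k ^ k"
proof (cases "k \<le> n")
  case True
  have "(real n / real k) ^ k \<le> real (n choose k)"
    using binomial_ge_n_over_k_pow_k[OF True] by simp
  then have "real k ^ k * (real n / real k) ^ k \<le> real k ^ k * real (n choose k)"
    by (intro mult_left_mono) auto
  moreover have "real k ^ k * (real n / real k) ^ k = real n ^ k"
    using assms by (simp add: power_divide)
  moreover have "(0::real) \<le> real k ^ k" by simp
  ultimately show ?thesis by linarith
next
  case False
  then have "real n ^ k \<le> real k ^ k" by (intro power_mono) auto
  moreover have "0 \<le> real k ^ k * real (n choose k)" by simp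
  ultimately show ?thesis by linarith
qed

lemma gens_ne: "1 \<le> m \<Longrightarrow> gens m k \<noteq> {}" by (auto simp: gens_def)

lemma norminf_le_norm1: "1 \<le> m \<Longrightarrow> norminf m k v \<le> norm1 m k v"
  unfolding norminf_def norm1_def
  by (subst Max_le_iff) (auto simp: gens_ne intro!: member_le_sum)

lemma norm1_le_norminf: "1 \<le> m \<Longrightarrow> norm1 m k v \<le> int (card (gens m k)) * norminf m k v"
  unfolding norminf_def norm1_def
  by (rule sum_bounded_above) (auto simp: gens_ne)

lemma norminf_ge: "g \<in> gens m k \<Longrightarrow> \<bar>v g\<bar> \<le> norminf m k v"
  unfolding norminf_def by (rule Max_ge) auto



theorem corollary8p14:
  fixes m k :: nat
  assumes "1 \<le> k" and "k \<le> m"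
  shows "(\<lambda>n. real (word_norm ((phi m ^^ n) [(GB k, False)])))
           \<sim>\<^sub>g (\<lambda>n. real_of_int (norm1 m k ((phi_ab m k ^^ n) (ab [(GB k, False)]))))
       \<and> (\<lambda>n. real_of_int (norm1 m k ((phi_ab m k ^^ n) (ab [(GB k, False)]))))
           \<sim>\<^sub>g (\<lambda>n. real_of_int (norminf m k ((phi_ab m k ^^ n) (ab [(GB k, False)]))))
       \<and> (\<lambda>n. real_of_int (norminf m k ((phi_ab m k ^^ n) (ab [(GB k, False)]))))
           \<sim>\<^sub>g (\<lambda>n. real n ^ k)"
proof -
  define fW where "fW = (\<lambda>n. real (word_norm ((phi m ^^ n) [(GB k, False)])))"
  define f1 where "f1 = (\<lambda>n. real_of_int (norm1 m k ((phi_ab m k ^^ n) (ab [(GB k, False)]))))"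
  define fi where "fi = (\<lambda>n. real_of_int (norminf m k ((phi_ab m k ^^ n) (ab [(GB k, False)]))))"
  define g where "g = (\<lambda>n. real n ^ k)"
  define K where "K = real (card (gens m k))"
  define Cc where "Cc = real (m + k + (m+1)^k * 2^k)"
  define D where "D = real ((m+1)^k)"
  define Kk where "Kk = real k ^ k"
  have m1: "1 \<le> m" using assms by simp
  have K0: "K > 0" unfolding K_def using gens_ne[OF m1, of k] by (simp add: card_gt_0_iff)
  have Cc0: "Cc > 0" unfolding Cc_def of_nat_0_less_iff using assms by simp
  have D0: "D \<ge> 0" unfolding D_def by simp
  have Kk0: "Kk > 0" unfolding Kk_def using assms by simp
  have letters: "fst ` set [(GB k, False)] \<subseteq> gens m k" using assms by (simp add: gens_def)
  have a: "f1 n \<le> fW n" for n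
  proof -
    have "(phi_ab m k ^^ n) (ab [(GB k, False)]) = ab ((phi m ^^ n) [(GB k, False)])"
      using ab_Phi[OF assms(2) letters, of n] by simp
    moreover have "norm1 m k (ab ((phi m ^^ n) [(GB k, False)])) \<le> int (word_norm ((phi m ^^ n) [(GB k, False)]))"
      by (rule norm1_le_word_norm)
    ultimately have "norm1 m k ((phi_ab m k ^^ n) (ab [(GB k, False)])) \<le> int (word_norm ((phi m ^^ n) [(GB k, False)]))"
      by simp
    then have "real_of_int (norm1 m k ((phi_ab m k ^^ n) (ab [(GB k, False)]))) \<le> real_of_int (int (word_norm ((phi m ^^ n) [(GB k, False)])))"
      by (simp only: of_int_le_iff)
    then show ?thesis unfolding f1_def fW_def by simp
  qed
  have b: "fi n \<le> f1 n" for n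
    unfolding fi_def f1_def using norminf_le_norm1[OF m1] by simp
  have c: "f1 n \<le> K * fi n" for n
  proof -
    have "norm1 m k ((phi_ab m k ^^ n) (ab [(GB k, False)])) \<le> int (card (gens m k)) * norminf m k ((phi_ab m k ^^ n) (ab [(GB k, False)]))"
      by (rule norm1_le_norminf[OF m1])
    then have "real_of_int (norm1 m k ((phi_ab m k ^^ n) (ab [(GB k, False)]))) \<le> real_of_int (int (card (gens m k)) * norminf m k ((phi_ab m k ^^ n) (ab [(GB k, False)])))"
      by (simp only: of_int_le_iff)
    then show ?thesis unfolding f1_def fi_def K_def by simp
  qed
  have d: "fW n \<le> Cc * g n + D" for n
  proof -
    have "word_norm ((phi m ^^ n) [(GB k, False)]) \<le> (m + k + (m+1)^k * 2^k) * n ^ k + (m+1)^k"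
      by (rule upper_nat[OF assms])
    then have "real (word_norm ((phi m ^^ n) [(GB k, False)])) \<le> real ((m + k + (m+1)^k * 2^k) * n ^ k + (m+1)^k)"
      by (simp only: of_nat_le_iff)
    then show ?thesis unfolding fW_def Cc_def g_def D_def by simp
  qed
  have e: "g n \<le> Kk * fi n + Kk" for n
  proof -
    have "GA m \<in> gens m k" using m1 by (simp add: gens_def)
    then have "\<bar>vv m k n (GA m)\<bar> \<le> norminf m k (vv m k n)" by (rule norminf_ge)
    moreover have "int (n choose k) \<le> vv m k n (GA m)" by (rule vv_A[OF assms])
    ultimately have "int (n choose k) \<le> norminf m k (vv m k n)" by linarith
    then have "real_of_int (int (n choose k)) \<le> real_of_int (norminf m k (vv m k n))"
      by (simp only: of_int_le_iff)
    then have "real (n choose k) \<le> fi n" unfolding fi_def vv_def by simp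
    then have "Kk * real (n choose k) \<le> Kk * fi n" using Kk0 by simp
    moreover have "g n \<le> Kk * real (n choose k) + Kk"
      unfolding g_def Kk_def by (rule lower_real[OF assms(1)])
    ultimately show ?thesis by linarith
  qed
  have e2: "g n \<le> Kk * f1 n + Kk" for n
  proof -
    have "Kk * fi n \<le> Kk * f1 n" using b[of n] Kk0 by (intro mult_left_mono) auto
    then show ?thesis using e[of n] by linarith
  qed
  have "fW \<sim>\<^sub>g f1"
    unfolding growth_equiv_def
  proof (intro conjI)
    show "\<exists>A B. A > 0 \<and> B \<ge> 0 \<and> (\<forall>n. fW n \<le> A * f1 n + B)"
    proof (rule exI[of _ "Cc * Kk"], rule exI[of _ "Cc * Kk + D"], intro conjI allI)
      fix n
      have "fW n \<le> Cc * g n + D" by (rule d)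
      also have "\<dots> \<le> Cc * (Kk * f1 n + Kk) + D" using e2[of n] Cc0 by (intro add_right_mono mult_left_mono) auto
      finally show "fW n \<le> Cc * Kk * f1 n + (Cc * Kk + D)" by (simp add: algebra_simps)
    qed (use Cc0 Kk0 D0 in auto)
    show "\<exists>A B. A > 0 \<and> B \<ge> 0 \<and> (\<forall>n. f1 n \<le> A * fW n + B)"
      by (rule exI[of _ "1::real"], rule exI[of _ "0::real"]) (simp add: a)
  qed
  moreover have "f1 \<sim>\<^sub>g fi"
    unfolding growth_equiv_def
  proof (intro conjI)
    show "\<exists>A B. A > 0 \<and> B \<ge> 0 \<and> (\<forall>n. f1 n \<le> A * fi n + B)"
      by (rule exI[of _ "K::real"], rule exI[of _ "0::real"]) (simp add: c K0)
    show "\<exists>A B. A > 0 \<and> B \<ge> 0 \<and> (\<forall>n. fi n \<le> A * f1 n + B)"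
      by (rule exI[of _ "1::real"], rule exI[of _ "0::real"]) (simp add: b)
  qed
  moreover have "fi \<sim>\<^sub>g g"
    unfolding growth_equiv_def
  proof (intro conjI)
    show "\<exists>A B. A > 0 \<and> B \<ge> 0 \<and> (\<forall>n. fi n \<le> A * g n + B)"
    proof (rule exI[of _ Cc], rule exI[of _ D], intro conjI allI)
      fix n show "fi n \<le> Cc * g n + D" using a[of n] b[of n] d[of n] by linarith
    qed (use Cc0 D0 in auto)
    show "\<exists>A B. A > 0 \<and> B \<ge> 0 \<and> (\<forall>n. g n \<le> A * fi n + B)"
      by (rule exI[of _ "Kk::real"], rule exI[of _ "Kk::real"]) (simp add: e Kk0 less_imp_le)
  qed
  ultimately show ?thesis unfolding fW_def f1_def fi_def g_def by blast
qed

end
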